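(* Let $\alpha$ be irrational with continued fraction $[0;a_1,a_2,\dots]$ and convergent denominators $(q_k)$. Let $q=\frac rs\in[0,1)$ be rational and $f(x)=\log(\{x-q\})$. Let $N\in\mathbb{N}$ with $N<\frac{q_K}{s}$ and write $N=b_{K-1}q_{K-1}+N'$ with integers $b_{K-1}\ge0$ and $0\le N'<q_{K-1}$. Then $$\big|S_{N'}(f,\alpha,b_{K-1}q_{K-1}\alpha)\big|\ll\log(q_{K+1})\sum_{\ell=1}^{K-1}a_\ell,$$ with implied constant independent of $N$ and $K$.
   Context: $\{x\}$ is the fractional part; $q_0=1,q_1=a_1,q_{k+1}=a_{k+1}q_k+q_{k-1}$. For $1$-periodic integrable $f$, $S_M(f,\alpha,y):=\sum_{n=1}^M f(n\alpha+y)-M\int_0^1 f(x)\,dx$. *)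

theory Defs
  imports "HOL-Analysis.Analysis"
begin

fun cf_rem :: "real \<Rightarrow> nat \<Rightarrow> real" where
  "cf_rem \<alpha> 0 = frac \<alpha>"
| "cf_rem \<alpha> (Suc k) = frac (1 / cf_rem \<alpha> k)"

fun cf_digit :: "real \<Rightarrow> nat \<Rightarrow> int" where
  "cf_digit \<alpha> 0 = \<lfloor>\<alpha>\<rfloor>"
| "cf_digit \<alpha> (Suc k) = \<lfloor>1 / cf_rem \<alpha> k\<rfloor>"

fun cf_den :: "real \<Rightarrow> nat \<Rightarrow> int" where
  "cf_den \<alpha> 0 = 1"
| "cf_den \<alpha> (Suc 0) = cf_digit \<alpha> 1"
| "cf_den \<alpha> (Suc (Suc k)) = cf_digit \<alpha> (Suc (Suc k)) * cf_den \<alpha> (Suc k) + cf_den \<alpha> k"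

definition birkhoff_S :: "(real \<Rightarrow> real) \<Rightarrow> nat \<Rightarrow> real \<Rightarrow> real \<Rightarrow> real" where
  "birkhoff_S f M \<alpha> y = (\<Sum>n=1..M. f (real n * \<alpha> + y)) - real M * integral {0..1} f"

end

theory Submission
  imports Defs
begin
definition xlnF :: "real \<Rightarrow> real" where "xlnF u = u * ln u - u"

lemma xlnF_cont: "continuous_on {0..} xlnF"
proof -
  have "continuous (at x within {0..}) xlnF" if "x \<ge> 0" for x
  proof (cases "x = 0")
    case True
    have l1: "((\<lambda>x. ln (inverse x) / inverse x) \<longlongrightarrow> 0) (at_right (0::real))"
      using filterlim_compose[OF ln_x_over_x_tendsto_0 filterlim_inverse_at_top_right] by simp
    have l2: "((\<lambda>x. - (ln (inverse x) / inverse x) - x) \<longlongrightarrow> 0) (at_right (0::real))"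
      using tendsto_diff[OF tendsto_minus[OF l1] tendsto_ident_at] by simp
    have "eventually (\<lambda>x. - (ln (inverse x) / inverse x) - x = x * ln x - x) (at_right (0::real))"
      using eventually_at_right_less[of 0] by eventually_elim (simp add: ln_inverse divide_inverse)
    then have "((\<lambda>x. x * ln x - x) \<longlongrightarrow> 0) (at_right (0::real))"
      using l2 tendsto_cong by fastforce
    then show ?thesis using True unfolding continuous_within xlnF_def
      by (simp add: at_within_Ici_at_right)
  next
    case False
    then have "x > 0" using that by simp
    then have "isCont xlnF x" unfolding xlnF_def by (auto intro!: continuous_intros)
    then show ?thesis using continuous_at_imp_continuous_within by blast
  qed
  then show ?thesis using continuous_on_eq_continuous_within by blast
qed

lemma ln_shift_integral:
  fixes c u v :: real
  assumes "u \<le> v" "u + c \<ge> 0"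
  shows "((\<lambda>x. ln (x + c)) has_integral (xlnF (v + c) - xlnF (u + c))) {u..v}"
proof -
  have cont: "continuous_on {u..v} (\<lambda>x. xlnF (x + c))"
    by (rule continuous_on_compose2[OF xlnF_cont]) (auto intro!: continuous_intros simp: assms)
  have der: "((\<lambda>x. xlnF (x + c)) has_vector_derivative ln (x + c)) (at x)" if "x \<in> {u<..<v} - {}" for x
  proof -
    have pos: "x + c > 0" using that assms by auto
    have "((\<lambda>x. (x + c) * ln (x + c) - (x + c)) has_real_derivative
        (1 * ln (x + c) + (x + c) * (1 / (x + c)) - 1)) (at x)"
      using pos by (auto intro!: derivative_eq_intros)
    then show ?thesis using pos unfolding xlnF_def has_real_derivative_iff_has_vector_derivative[symmetric]
      by simp
  qed
  show ?thesis
    using fundamental_theorem_of_calculus_interior_strong[OF finite.emptyI assms(1) der cont] by simp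
qed

lemma integral_ln_frac:
  fixes q :: real
  assumes "0 \<le> q" "q < 1"
  shows "integral {0..1} (\<lambda>x. ln (frac (x - q))) = -1"
proof -
  have i1: "((\<lambda>x. ln (x + (1 - q))) has_integral (xlnF 1 - xlnF (1 - q))) {0..q}"
    using ln_shift_integral[of 0 q "1 - q"] assms by simp
  have i2: "((\<lambda>x. ln (x + (- q))) has_integral (xlnF (1 - q) - xlnF 0)) {q..1}"
    using ln_shift_integral[of q 1 "- q"] assms by simp
  have j1: "((\<lambda>x. ln (frac (x - q))) has_integral (xlnF 1 - xlnF (1 - q))) {0..q}"
  proof (rule has_integral_spike_finite[OF _ _ i1])
    show "finite {q}" by simp
    fix x assume "x \<in> {0..q} - {q}"
    then have "\<lfloor>x - q\<rfloor> = -1" using assms by (auto simp: floor_eq_iff)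
    then have "frac (x - q) = x - q + 1" by (simp add: frac_def)
    then show "ln (frac (x - q)) = ln (x + (1 - q))" by (metis add.commute add_diff_eq diff_add_eq)
  qed
  have j2: "((\<lambda>x. ln (frac (x - q))) has_integral (xlnF (1 - q) - xlnF 0)) {q..1}"
  proof (rule has_integral_spike_finite[OF _ _ i2])
    show "finite {1}" by simp
    fix x assume "x \<in> {q..1} - {1}"
    then have "x - q \<in> {0..<1}" using assms by auto
    then have "frac (x - q) = x - q" by (simp add: frac_eq)
    then show "ln (frac (x - q)) = ln (x + (- q))" by simp
  qed
  have "((\<lambda>x. ln (frac (x - q))) has_integral (xlnF 1 - xlnF 0)) {0..1}"
    using has_integral_combine[OF _ _ j1 j2] assms by simp
  then show ?thesis by (simp add: integral_unique xlnF_def)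
qed

definition LF :: "nat \<Rightarrow> real" where "LF n = (\<Sum>i=1..n. ln (real i))"

lemma LF_Suc: "LF (Suc n) = LF n + ln (real (Suc n))"
  unfolding LF_def by simp

lemma ln_step_upper: "real n \<ge> 1 \<Longrightarrow> real n * (ln (real n + 1) - ln (real n)) \<le> 1"
proof -
  assume n: "real n \<ge> 1"
  have "ln (real n + 1) - ln (real n) = ln ((real n + 1) / real n)" using n by (simp add: ln_div)
  also have "\<dots> \<le> (real n + 1) / real n - 1" using n by (intro ln_le_minus_one) auto
  also have "\<dots> = 1 / real n" using n by (simp add: field_simps)
  finally show ?thesis using n by (simp add: field_simps)
qed

lemma ln_step_lower: "real n \<ge> 1 \<Longrightarrow> (real n + 1) * (ln (real n + 1) - ln (real n)) \<ge> 1"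
proof -
  assume n: "real n \<ge> 1"
  have "ln (real n / (real n + 1)) \<le> real n / (real n + 1) - 1" using n by (intro ln_le_minus_one) auto
  also have "\<dots> = - 1 / (real n + 1)" using n by (simp add: field_simps)
  finally have "ln (real n) - ln (real n + 1) \<le> - 1 / (real n + 1)" using n by (simp add: ln_div)
  then have "1 / (real n + 1) \<le> ln (real n + 1) - ln (real n)" by simp
  then show ?thesis using n by (simp add: field_simps)
qed

lemma LF_bounds: "n \<ge> 1 \<Longrightarrow> real n * ln n - n + 1 \<le> LF n \<and> LF n \<le> real n * ln n - n + 1 + ln n"
proof (induction n rule: dec_induct)
  case base
  then show ?case by (simp add: LF_def)
next
  case (step n)
  have n: "real n \<ge> 1" using step by simp
  have a: "real n * (ln (real n + 1) - ln (real n)) \<le> 1" by (rule ln_step_upper[OF n])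
  have b: "(real n + 1) * (ln (real n + 1) - ln (real n)) \<ge> 1" by (rule ln_step_lower[OF n])
  show ?case using step.IH a b unfolding LF_Suc by (simp add: algebra_simps)
qed

lemma sum_le_subset_nonpos:
  fixes f :: "nat \<Rightarrow> real"
  assumes "finite A" "B \<subseteq> A" "\<And>x. x \<in> A - B \<Longrightarrow> f x \<le> 0"
  shows "sum f A \<le> sum f B"
proof -
  have "sum f A = sum f B + sum f (A - B)"
    using assms(1,2) by (metis add.commute sum.subset_diff)
  moreover have "sum f (A - B) \<le> 0" by (rule sum_nonpos) (use assms(3) in auto)
  ultimately show ?thesis by simp
qed

definition uB :: "nat \<Rightarrow> nat \<Rightarrow> real" where
  "uB Q m = (if m = 0 then 0 else ln (min 1 ((real m + 2) / real Q)))"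

definition lB :: "nat \<Rightarrow> real \<Rightarrow> nat \<Rightarrow> real" where
  "lB Q d m = (if m \<le> 1 \<or> m = Q - 1 then ln d else ln ((real m - 1) / real Q))"

lemma sum_uB: assumes "Q \<ge> 1" shows "(\<Sum>m<Q. uB Q m) \<le> 3 * ln Q - Q + 1"
proof (cases "Q = 1")
  case True
  then show ?thesis by (simp add: uB_def)
next
  case False
  then have Q2: "Q \<ge> 2" using assms by simp
  have np: "uB Q m \<le> 0" for m
    using assms by (simp add: uB_def)
  have "(\<Sum>m<Q. uB Q m) \<le> (\<Sum>m\<in>{1..Q-2}. uB Q m)"
    by (rule sum_le_subset_nonpos) (auto simp: np)
  also have "\<dots> = (\<Sum>m\<in>{1..Q-2}. ln ((real (m + 2)) / real Q))"
    using Q2 by (intro sum.cong) (auto simp: uB_def min_def field_simps)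
  also have "\<dots> = (\<Sum>i\<in>{3..Q}. ln (real i / real Q))"
  proof -
    have e: "{3..Q} = {1+2..(Q-2)+2}" using Q2 by auto
    show ?thesis by (simp only: e sum.shift_bounds_cl_nat_ivl)
  qed
  also have "\<dots> = (\<Sum>i\<in>{3..Q}. ln (real i)) - real (Q - 2) * ln Q"
    using Q2 by (simp add: ln_div sum_subtractf)
  also have "(\<Sum>i\<in>{3..Q}. ln (real i)) \<le> LF Q"
    unfolding LF_def by (rule sum_mono2) auto
  finally have "(\<Sum>m<Q. uB Q m) \<le> LF Q - real (Q - 2) * ln Q" by simp
  moreover have "LF Q \<le> real Q * ln Q - Q + 1 + ln Q" using LF_bounds assms by blast
  moreover have "real (Q - 2) = real Q - 2" using Q2 by simp
  ultimately show ?thesis by (simp add: algebra_simps)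
qed

lemma sum_lB: assumes "Q \<ge> 1" "0 < d" "d \<le> 1" shows "(\<Sum>m<Q. lB Q d m) \<ge> 3 * ln d + 1 - Q"
proof -
  let ?A = "{m\<in>{..<Q}. m \<le> 1 \<or> m = Q - 1}" and ?B = "{m\<in>{..<Q}. \<not> (m \<le> 1 \<or> m = Q - 1)}"
  have lnd: "ln d \<le> 0" using assms by simp
  have split: "(\<Sum>m<Q. lB Q d m) = (\<Sum>m\<in>?A. lB Q d m) + (\<Sum>m\<in>?B. lB Q d m)"
  proof -
    have "?B = {..<Q} - ?A" by auto
    moreover have "(\<Sum>m<Q. lB Q d m) = (\<Sum>m\<in>{..<Q} - ?A. lB Q d m) + (\<Sum>m\<in>?A. lB Q d m)"
      by (rule sum.subset_diff) auto
    ultimately show ?thesis by simp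
  qed
  have cA: "card ?A \<le> 3"
  proof -
    have "?A \<subseteq> {0, 1, Q - 1}" by auto
    then have "card ?A \<le> card {0, 1, Q - 1}" by (intro card_mono) auto
    also have "\<dots> \<le> 3" by (simp add: card_insert_if)
    finally show ?thesis .
  qed
  have sA: "(\<Sum>m\<in>?A. lB Q d m) = real (card ?A) * ln d" by (simp add: lB_def)
  have "real (card ?A) * ln d \<ge> 3 * ln d" using cA lnd
  proof -
    have "real (card ?A) \<le> 3" using cA by simp
    from mult_right_mono_neg[OF this lnd] show ?thesis by simp
  qed
  have sB: "(\<Sum>m\<in>?B. lB Q d m) = (\<Sum>m\<in>?B. ln ((real m - 1) / real Q))" by (simp add: lB_def)
  have "(\<Sum>m\<in>{2..Q+1}. ln ((real m - 1) / real Q)) \<le> (\<Sum>m\<in>?B. ln ((real m - 1) / real Q))"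
  proof (rule sum_le_subset_nonpos)
    show "?B \<subseteq> {2..Q+1}" by auto
    fix m assume "m \<in> {2..Q+1} - ?B"
    then have "real m - 1 > 0" "real m - 1 \<le> real Q" by auto
    then have "(real m - 1) / real Q \<le> 1" "(real m - 1) / real Q > 0" using assms by auto
    then show "ln ((real m - 1) / real Q) \<le> 0" by simp
  qed simp
  moreover have "(\<Sum>m\<in>{2..Q+1}. ln ((real m - 1) / real Q)) = (\<Sum>i\<in>{1..Q}. ln (real i / real Q))"
  proof -
    have e: "{2..Q+1} = {1+1..Q+1}" by simp
    have "(\<Sum>m\<in>{2..Q+1}. ln ((real m - 1) / real Q)) = (\<Sum>i\<in>{1..Q}. ln ((real (i+1) - 1) / real Q))"
      by (simp only: e sum.shift_bounds_cl_nat_ivl)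
    then show ?thesis by simp
  qed
  moreover have "(\<Sum>i\<in>{1..Q}. ln (real i / real Q)) = LF Q - real Q * ln Q"
    unfolding LF_def using assms by (simp add: ln_div sum_subtractf)
  moreover have "real Q * ln Q - Q + 1 \<le> LF Q" using LF_bounds assms by blast
  ultimately show ?thesis using split sA sB \<open>real (card ?A) * ln d \<ge> 3 * ln d\<close> by linarith
qed

lemma pt_upper:
  fixes \<theta> d :: real and m Q :: nat
  assumes "m < Q" "-1 < \<theta>" "\<theta> < 2" "frac ((real m + \<theta>) / real Q) \<ge> d" "d > 0"
  shows "ln (frac ((real m + \<theta>) / real Q)) \<le> uB Q m"
proof -
  let ?v = "(real m + \<theta>) / real Q"
  let ?f = "frac ?v"
  have fpos: "?f > 0" using assms by linarith
  have f1: "?f < 1" by (rule frac_lt_1)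
  show ?thesis
  proof (cases "m = 0")
    case True
    then show ?thesis using fpos f1 by (simp add: uB_def)
  next
    case False
    have Qpos: "real Q > 0" using assms by simp
    have vpos: "?v \<ge> 0" using False assms Qpos by (simp add: divide_nonneg_pos)
    have "?f \<le> ?v" using vpos by (simp add: frac_def)
    also have "\<dots> \<le> (real m + 2) / real Q" using assms Qpos by (simp add: divide_right_mono)
    finally have "?f \<le> min 1 ((real m + 2) / real Q)" using f1 by simp
    moreover have "min 1 ((real m + 2) / real Q) > 0" using Qpos by simp
    ultimately have "ln ?f \<le> ln (min 1 ((real m + 2) / real Q))"
      using fpos ln_le_cancel_iff by blast
    then show ?thesis using False by (simp add: uB_def)
  qed
qed

lemma pt_lower:
  fixes \<theta> d :: real and m Q :: nat
  assumes "m < Q" "-1 < \<theta>" "\<theta> < 2" "frac ((real m + \<theta>) / real Q) \<ge> d" "d > 0"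
  shows "ln (frac ((real m + \<theta>) / real Q)) \<ge> lB Q d m"
proof (cases "m \<le> 1 \<or> m = Q - 1")
  case True
  have "ln d \<le> ln (frac ((real m + \<theta>) / real Q))"
    using assms ln_le_cancel_iff by (metis order_less_le_trans)
  then show ?thesis using True by (simp add: lB_def)
next
  case False
  let ?v = "(real m + \<theta>) / real Q"
  have Qpos: "real Q > 0" using assms by simp
  have m2: "real m \<ge> 2" "real m + 2 \<le> real Q" using False assms by auto
  have lo: "?v > (real m - 1) / real Q" using assms Qpos by (simp add: divide_strict_right_mono)
  have hi: "?v < 1" using assms Qpos m2 by (simp add: divide_less_eq)
  have "(real m - 1) / real Q > 0" using m2 Qpos by simp
  with lo have "?v \<ge> 0" by linarith
  with hi have "frac ?v = ?v" by (simp add: frac_eq)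
  then have "ln (frac ?v) \<ge> ln ((real m - 1) / real Q)"
    using lo \<open>(real m - 1) / real Q > 0\<close> by simp
  then show ?thesis using False by (simp add: lB_def)
qed

lemma block:
  fixes \<alpha> z d :: real and Q :: nat and P :: int
  assumes Q1: "Q \<ge> 1" and cop: "coprime P (int Q)" and del: "\<bar>real Q * \<alpha> - of_int P\<bar> < 1 / real Q"
    and d: "0 < d" "d \<le> 1"
    and good: "\<forall>n\<in>{1..Q}. frac (z + real n * \<alpha>) \<ge> d"
  shows "\<bar>(\<Sum>n=1..Q. ln (frac (z + real n * \<alpha>))) + real Q\<bar> \<le> 3 * \<bar>ln d\<bar> + 3 * ln (real Q) + 1"
proof -
  define \<delta> where "\<delta> = real Q * \<alpha> - of_int P"
  define G where "G = \<lfloor>real Q * z\<rfloor>"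
  define \<omega> where "\<omega> = real Q * z - of_int G"
  define \<sigma> where "\<sigma> n = nat ((G + int n * P) mod int Q)" for n
  define \<theta> where "\<theta> n = \<omega> + real n * \<delta>" for n
  have Qpos: "real Q > 0" using Q1 by simp
  have om: "0 \<le> \<omega>" "\<omega> < 1" unfolding \<omega>_def G_def by linarith+
  have th: "-1 < \<theta> n \<and> \<theta> n < 2" if "n \<in> {1..Q}" for n
  proof -
    have "\<bar>real n * \<delta>\<bar> \<le> real Q * \<bar>\<delta>\<bar>" using that by (simp add: abs_mult mult_right_mono)
    also have "\<dots> < real Q * (1 / real Q)" using del Qpos unfolding \<delta>_def by (intro mult_strict_left_mono) auto
    also have "\<dots> = 1" using Qpos by simp
    finally show ?thesis using om unfolding \<theta>_def by linarith
  qed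
  have sig_lt: "\<sigma> n < Q" for n
    unfolding \<sigma>_def using Q1 by (simp add: nat_less_iff)
  have rep: "frac (z + real n * \<alpha>) = frac ((real (\<sigma> n) + \<theta> n) / real Q)" for n
  proof -
    define j where "j = (G + int n * P) div int Q"
    have "G + int n * P = int (\<sigma> n) + int Q * j"
      unfolding \<sigma>_def j_def using Q1 by simp
    then have eq: "real_of_int G + real n * of_int P = real (\<sigma> n) + real Q * of_int j"
    proof -
      have "real_of_int (G + int n * P) = real_of_int (int (\<sigma> n) + int Q * j)"
        using \<open>G + int n * P = int (\<sigma> n) + int Q * j\<close> by simp
      then show ?thesis by simp
    qed
    have "z + real n * \<alpha> = (real Q * z + real n * (real Q * \<alpha>)) / real Q"
      using Qpos by (simp add: field_simps)
    also have "\<dots> = (of_int G + \<omega> + real n * (of_int P + \<delta>)) / real Q"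
      unfolding \<omega>_def \<delta>_def by simp
    also have "\<dots> = (real (\<sigma> n) + \<theta> n) / real Q + of_int j"
      using eq Qpos unfolding \<theta>_def by (simp add: field_simps)
    finally show ?thesis by simp
  qed
  have inj: "inj_on \<sigma> {1..Q}"
  proof (rule inj_onI)
    fix n n' assume nn: "n \<in> {1..Q}" "n' \<in> {1..Q}" "\<sigma> n = \<sigma> n'"
    have "(G + int n * P) mod int Q = (G + int n' * P) mod int Q"
      using nn(3) unfolding \<sigma>_def using Q1 by (simp add: nat_eq_iff2)
    then have "int Q dvd (G + int n * P) - (G + int n' * P)"
      by (simp add: mod_eq_dvd_iff)
    then have "int Q dvd (int n - int n') * P" by (simp add: algebra_simps)
    then have dv: "int Q dvd (int n - int n')"
      using coprime_dvd_mult_left_iff[of "int Q" P "int n - int n'"] cop by (simp add: coprime_commute)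
    have "\<bar>int n - int n'\<bar> < int Q" using nn by auto
    moreover have "int n - int n' = 0"
    proof (rule ccontr)
      assume "int n - int n' \<noteq> 0"
      from dvd_imp_le_int[OF this dv] \<open>\<bar>int n - int n'\<bar> < int Q\<close> show False by simp
    qed
    then show "n = n'" by simp
  qed
  have img: "\<sigma> ` {1..Q} = {..<Q}"
  proof (rule card_subset_eq)
    show "finite {..<Q}" by simp
    show "\<sigma> ` {1..Q} \<subseteq> {..<Q}" using sig_lt by auto
    show "card (\<sigma> ` {1..Q}) = card {..<Q}" using card_image[OF inj] by simp
  qed
  have bij: "bij_betw \<sigma> {1..Q} {..<Q}" using inj img by (rule bij_betw_imageI)
  have gd: "frac ((real (\<sigma> n) + \<theta> n) / real Q) \<ge> d" if "n \<in> {1..Q}" for n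
    using good that rep by simp
  have up: "(\<Sum>n=1..Q. ln (frac (z + real n * \<alpha>))) \<le> (\<Sum>n=1..Q. uB Q (\<sigma> n))"
    by (rule sum_mono) (use pt_upper[OF sig_lt _ _ gd] th d in \<open>auto simp: rep\<close>)
  have lo: "(\<Sum>n=1..Q. ln (frac (z + real n * \<alpha>))) \<ge> (\<Sum>n=1..Q. lB Q d (\<sigma> n))"
    by (rule sum_mono) (use pt_lower[OF sig_lt _ _ gd] th d in \<open>auto simp: rep\<close>)
  have "(\<Sum>n=1..Q. uB Q (\<sigma> n)) = (\<Sum>m<Q. uB Q m)" by (rule sum.reindex_bij_betw[OF bij])
  moreover have "(\<Sum>n=1..Q. lB Q d (\<sigma> n)) = (\<Sum>m<Q. lB Q d m)" by (rule sum.reindex_bij_betw[OF bij])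
  moreover note sum_uB[OF Q1] sum_lB[OF Q1 d]
  moreover have "ln d \<le> 0" "ln (real Q) \<ge> 0" using d Q1 by auto
  ultimately show ?thesis using up lo by (simp add: abs_le_iff)
qed

lemma rem_props:
  assumes irr: "\<alpha> \<notin> \<rat>" and a: "0 < \<alpha>" "\<alpha> < 1"
  shows "cf_rem \<alpha> k \<notin> \<rat> \<and> 0 < cf_rem \<alpha> k \<and> cf_rem \<alpha> k < 1"
proof (induction k)
  case 0
  have "frac \<alpha> = \<alpha>" using a by (simp add: frac_eq)
  then show ?case using assms by simp
next
  case (Suc k)
  let ?x = "1 / cf_rem \<alpha> k"
  have xi: "?x \<notin> \<rat>" using Suc.IH
    by (metis Rats_divide Rats_1 div_by_1 divide_divide_eq_right mult_1)
  have fr: "frac ?x = ?x - of_int \<lfloor>?x\<rfloor>" by (simp add: frac_def)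
  have "frac ?x \<notin> \<rat>"
  proof
    assume "frac ?x \<in> \<rat>"
    then have "frac ?x + of_int \<lfloor>?x\<rfloor> \<in> \<rat>" by (simp add: Rats_add)
    moreover have "frac ?x + of_int \<lfloor>?x\<rfloor> = ?x" by (simp add: frac_def)
    ultimately show False using xi by metis
  qed
  moreover have "frac ?x \<noteq> 0" using \<open>frac ?x \<notin> \<rat>\<close> by (metis Rats_0)
  moreover have "frac ?x \<ge> 0" "frac ?x < 1" by (simp_all add: frac_ge_0 frac_lt_1)
  ultimately show ?case by simp
qed

context
  fixes \<alpha> :: real
  assumes irr: "\<alpha> \<notin> \<rat>" and a01: "0 < \<alpha>" "\<alpha> < 1"
begin

lemma rem_pos: "0 < cf_rem \<alpha> k" and rem_lt1: "cf_rem \<alpha> k < 1"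
  using rem_props[OF irr a01] by auto

lemma rem_recip: "1 / cf_rem \<alpha> k = of_int (cf_digit \<alpha> (Suc k)) + cf_rem \<alpha> (Suc k)"
  by (simp add: frac_def)

declare cf_rem.simps[simp del] cf_digit.simps[simp del]

lemma rem0: "cf_rem \<alpha> 0 = \<alpha>" using a01 by (simp add: cf_rem.simps frac_eq)

lemma digit_ge1: "cf_digit \<alpha> (Suc k) \<ge> 1"
proof -
  have "1 / cf_rem \<alpha> k \<ge> 1" using rem_pos[of k] rem_lt1[of k] by simp
  then show ?thesis by (simp add: cf_digit.simps)
qed

lemma den_props: "1 \<le> cf_den \<alpha> k \<and> cf_den \<alpha> k \<le> cf_den \<alpha> (Suc k)"
proof (induction k)
  case 0
  then show ?case using digit_ge1[of 0] by simp
next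
  case (Suc k)
  have "cf_den \<alpha> (Suc (Suc k)) = cf_digit \<alpha> (Suc (Suc k)) * cf_den \<alpha> (Suc k) + cf_den \<alpha> k" by simp
  moreover have "cf_digit \<alpha> (Suc (Suc k)) * cf_den \<alpha> (Suc k) \<ge> cf_den \<alpha> (Suc k)"
    using digit_ge1[of "Suc k"] Suc.IH by (simp add: mult_le_cancel_right1)
  ultimately show ?case using Suc.IH by linarith
qed

lemma den_pos: "1 \<le> cf_den \<alpha> k" using den_props by blast

lemma den_mono: "j \<le> k \<Longrightarrow> cf_den \<alpha> j \<le> cf_den \<alpha> k"
proof (induction k rule: dec_induct)
  case base then show ?case by simp
next
  case (step n) then show ?case using den_props[of n] by linarith
qed

lemma den_ge2: "k \<ge> 2 \<Longrightarrow> cf_den \<alpha> k \<ge> 2"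
proof -
  assume k: "k \<ge> 2"
  have "cf_den \<alpha> (Suc (Suc 0)) = cf_digit \<alpha> (Suc (Suc 0)) * cf_den \<alpha> (Suc 0) + cf_den \<alpha> 0"
    by (simp only: cf_den.simps)
  moreover have "cf_digit \<alpha> (Suc (Suc 0)) * cf_den \<alpha> (Suc 0) \<ge> 1 * 1"
    using digit_ge1[of "Suc 0"] den_pos[of "Suc 0"] by (intro mult_mono) auto
  ultimately have "cf_den \<alpha> (Suc (Suc 0)) \<ge> 2" by simp
  moreover have "Suc (Suc 0) \<le> k" using k by simp
  ultimately show ?thesis using den_mono by (meson order_trans)
qed

lemma den_step: "cf_den \<alpha> (Suc k) \<le> (cf_digit \<alpha> (Suc k) + 1) * cf_den \<alpha> k"
proof (cases k)
  case 0
  then show ?thesis by simp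
next
  case (Suc j)
  have "cf_den \<alpha> j \<le> cf_den \<alpha> k" using den_mono Suc by simp
  then show ?thesis using Suc by (simp add: algebra_simps)
qed

fun cfp :: "nat \<Rightarrow> int" where
  "cfp 0 = 0"
| "cfp (Suc 0) = 1"
| "cfp (Suc (Suc k)) = cf_digit \<alpha> (Suc (Suc k)) * cfp (Suc k) + cfp k"

fun cfE :: "nat \<Rightarrow> real" where
  "cfE 0 = \<alpha>"
| "cfE (Suc k) = cfE k * cf_rem \<alpha> (Suc k)"

lemma cfE_pos: "cfE k > 0"
  by (induction k) (use a01 rem_pos in auto)

lemma err_eq: "of_int (cf_den \<alpha> k) * \<alpha> - of_int (cfp k) = (-1) ^ k * cfE k
   \<and> of_int (cf_den \<alpha> (Suc k)) * \<alpha> - of_int (cfp (Suc k)) = (-1) ^ Suc k * cfE (Suc k)"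
proof (induction k)
  case 0
  have "1 / \<alpha> = of_int (cf_digit \<alpha> 1) + cf_rem \<alpha> 1"
    using rem_recip[of 0] a01 by (simp add: rem0)
  then have "of_int (cf_digit \<alpha> 1) = 1 / \<alpha> - cf_rem \<alpha> 1" by simp
  then have "of_int (cf_digit \<alpha> 1) * \<alpha> - 1 = - (\<alpha> * cf_rem \<alpha> 1)"
    using a01 by (simp add: field_simps)
  then show ?case using a01 by (simp add: rem0)
next
  case (Suc k)
  let ?a = "of_int (cf_digit \<alpha> (Suc (Suc k))) :: real"
  have r: "?a = 1 / cf_rem \<alpha> (Suc k) - cf_rem \<alpha> (Suc (Suc k))" using rem_recip[of "Suc k"] by simp
  have "of_int (cf_den \<alpha> (Suc (Suc k))) * \<alpha> - of_int (cfp (Suc (Suc k)))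
      = ?a * (of_int (cf_den \<alpha> (Suc k)) * \<alpha> - of_int (cfp (Suc k))) + (of_int (cf_den \<alpha> k) * \<alpha> - of_int (cfp k))"
    by (simp add: algebra_simps)
  also have "\<dots> = ?a * ((-1) ^ Suc k * cfE (Suc k)) + (-1) ^ k * cfE k" using Suc.IH by simp
  also have "\<dots> = (-1) ^ k * (cfE k - ?a * cfE k * cf_rem \<alpha> (Suc k))" by (simp add: algebra_simps)
  also have "\<dots> = (-1) ^ k * (cfE k * cf_rem \<alpha> (Suc k) * cf_rem \<alpha> (Suc (Suc k)))"
  proof -
    have h: "?a * cf_rem \<alpha> (Suc k) = 1 - cf_rem \<alpha> (Suc k) * cf_rem \<alpha> (Suc (Suc k))"
      unfolding r using rem_pos[of "Suc k"] by (simp add: left_diff_distrib)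
    have "cfE k - ?a * cfE k * cf_rem \<alpha> (Suc k) = cfE k - cfE k * (?a * cf_rem \<alpha> (Suc k))" by simp
    also have "\<dots> = cfE k - cfE k * (1 - cf_rem \<alpha> (Suc k) * cf_rem \<alpha> (Suc (Suc k)))" by (simp only: h)
    also have "\<dots> = cfE k * cf_rem \<alpha> (Suc k) * cf_rem \<alpha> (Suc (Suc k))" by (simp add: algebra_simps)
    finally show ?thesis by simp
  qed
  also have "\<dots> = (-1) ^ Suc (Suc k) * cfE (Suc (Suc k))" by simp
  finally show ?case using Suc.IH by simp
qed

lemma err_abs: "\<bar>of_int (cf_den \<alpha> k) * \<alpha> - of_int (cfp k)\<bar> = cfE k"
  using err_eq[of k] cfE_pos[of k] by (simp add: abs_mult)

lemma E_identity: "of_int (cf_den \<alpha> (Suc k)) * cfE k + of_int (cf_den \<alpha> k) * cfE (Suc k) = 1"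
proof (induction k)
  case 0
  have "1 / \<alpha> = of_int (cf_digit \<alpha> 1) + cf_rem \<alpha> 1"
    using rem_recip[of 0] a01 by (simp add: rem0)
  then show ?case using a01 by (simp add: field_simps)
next
  case (Suc k)
  have r: "of_int (cf_digit \<alpha> (Suc (Suc k))) + cf_rem \<alpha> (Suc (Suc k)) = 1 / cf_rem \<alpha> (Suc k)"
    using rem_recip[of "Suc k"] by simp
  have "of_int (cf_den \<alpha> (Suc (Suc k))) * cfE (Suc k) + of_int (cf_den \<alpha> (Suc k)) * cfE (Suc (Suc k))
     = of_int (cf_den \<alpha> (Suc k)) * cfE (Suc k) * (of_int (cf_digit \<alpha> (Suc (Suc k))) + cf_rem \<alpha> (Suc (Suc k)))
       + of_int (cf_den \<alpha> k) * cfE (Suc k)" by (simp add: algebra_simps)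
  also have "\<dots> = of_int (cf_den \<alpha> (Suc k)) * cfE k + of_int (cf_den \<alpha> k) * cfE (Suc k)"
    unfolding r using rem_pos[of "Suc k"] by (simp add: field_simps)
  finally show ?case using Suc.IH by simp
qed

lemma err_lt: "cfE k < 1 / of_int (cf_den \<alpha> (Suc k))"
proof -
  have "of_int (cf_den \<alpha> k) * cfE (Suc k) > 0" using den_pos[of k] cfE_pos[of "Suc k"] by simp
  then have "of_int (cf_den \<alpha> (Suc k)) * cfE k < 1" using E_identity[of k] by linarith
  moreover have "(of_int (cf_den \<alpha> (Suc k)) :: real) > 0" using den_pos[of "Suc k"] by simp
  ultimately show ?thesis by (simp add: field_simps)
qed

lemma det: "cf_den \<alpha> k * cfp (Suc k) - cf_den \<alpha> (Suc k) * cfp k = (-1) ^ k"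
proof (induction k)
  case 0 then show ?case by simp
next
  case (Suc k)
  have "cf_den \<alpha> (Suc k) * cfp (Suc (Suc k)) - cf_den \<alpha> (Suc (Suc k)) * cfp (Suc k)
     = - (cf_den \<alpha> k * cfp (Suc k) - cf_den \<alpha> (Suc k) * cfp k)" by (simp add: algebra_simps)
  then show ?case using Suc.IH by simp
qed

lemma cop: "coprime (cfp k) (cf_den \<alpha> k)"
proof -
  have "(-1) ^ k * (cf_den \<alpha> k * cfp (Suc k) - cf_den \<alpha> (Suc k) * cfp k) = 1"
    using det[of k] by (simp flip: power_mult_distrib)
  then have "cfp k * (- ((-1) ^ k * cf_den \<alpha> (Suc k))) + cf_den \<alpha> k * ((-1) ^ k * cfp (Suc k)) = 1"
    by (simp add: algebra_simps)
  then show ?thesis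
  proof (intro coprimeI)
    fix c assume eq: "cfp k * (- ((-1) ^ k * cf_den \<alpha> (Suc k))) + cf_den \<alpha> k * ((-1) ^ k * cfp (Suc k)) = 1"
      and c: "c dvd cfp k" "c dvd cf_den \<alpha> k"
    have "c dvd cfp k * (- ((-1) ^ k * cf_den \<alpha> (Suc k))) + cf_den \<alpha> k * ((-1) ^ k * cfp (Suc k))"
      using c by (intro dvd_add dvd_mult2) auto
    then show "is_unit c" using eq by simp
  qed
qed

end

definition Tsum :: "(real \<Rightarrow> real) \<Rightarrow> real \<Rightarrow> real \<Rightarrow> nat \<Rightarrow> real" where
  "Tsum g \<alpha> z M = (\<Sum>n=1..M. g (z + real n * \<alpha>)) + real M"

lemma Tsum_split: "Tsum g \<alpha> z (X + Y) = Tsum g \<alpha> z X + Tsum g \<alpha> (z + real X * \<alpha>) Y"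
proof -
  have "(\<Sum>n=1..X + Y. g (z + real n * \<alpha>)) = (\<Sum>n=1..X. g (z + real n * \<alpha>)) + (\<Sum>n=X+1..X + Y. g (z + real n * \<alpha>))"
    by (rule sum.ub_add_nat) simp
  moreover have "(\<Sum>n=X+1..X + Y. g (z + real n * \<alpha>)) = (\<Sum>n=1..Y. g (z + real (n + X) * \<alpha>))"
  proof -
    have e: "{X+1..X+Y} = {1+X..Y+X}" by (simp add: add.commute)
    show ?thesis by (simp only: e sum.shift_bounds_cl_nat_ivl)
  qed
  moreover have "(\<Sum>n=1..Y. g (z + real (n + X) * \<alpha>)) = (\<Sum>n=1..Y. g (z + real X * \<alpha> + real n * \<alpha>))"
    by (simp add: algebra_simps)
  ultimately show ?thesis unfolding Tsum_def by simp
qed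

definition goodp :: "(real \<Rightarrow> bool) \<Rightarrow> real \<Rightarrow> real \<Rightarrow> nat \<Rightarrow> bool" where
  "goodp Pr \<alpha> z M = (\<forall>n\<in>{1..M}. Pr (z + real n * \<alpha>))"

lemma goodp_split: "goodp Pr \<alpha> z (X + Y) \<Longrightarrow> goodp Pr \<alpha> z X \<and> goodp Pr \<alpha> (z + real X * \<alpha>) Y"
proof -
  assume h: "goodp Pr \<alpha> z (X + Y)"
  have "goodp Pr \<alpha> z X" using h unfolding goodp_def by auto
  moreover have "Pr (z + real X * \<alpha> + real n * \<alpha>)" if "n \<in> {1..Y}" for n
  proof -
    have "X + n \<in> {1..X+Y}" using that by auto
    then have "Pr (z + real (X + n) * \<alpha>)" using h unfolding goodp_def by blast
    then show ?thesis by (simp add: algebra_simps)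
  qed
  ultimately show ?thesis unfolding goodp_def by blast
qed

lemma ostrowski:
  fixes g :: "real \<Rightarrow> real" and Qs A :: "nat \<Rightarrow> nat" and B :: real
  assumes Q0: "Qs 0 = 1" and Qstep: "\<And>j. Qs (Suc j) \<le> (A (Suc j) + 1) * Qs j"
    and Qpos: "\<And>j. Qs j \<ge> 1" and B: "B \<ge> 0"
    and blk: "\<And>j z. j < k \<Longrightarrow> goodp Pr \<alpha> z (Qs j) \<Longrightarrow> \<bar>Tsum g \<alpha> z (Qs j)\<bar> \<le> B"
  shows "M < Qs k \<Longrightarrow> goodp Pr \<alpha> z M \<Longrightarrow> \<bar>Tsum g \<alpha> z M\<bar> \<le> (\<Sum>l=1..k. real (A l)) * B"
  using blk
proof (induction k arbitrary: M z)
  case 0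
  then have "M = 0" using Q0 by simp
  then show ?case by (simp add: Tsum_def)
next
  case (Suc k)
  let ?Q = "Qs k" and ?S = "(\<Sum>l=1..k. real (A l))"
  define c where "c = M div ?Q"
  define R where "R = M mod ?Q"
  have M: "M = c * ?Q + R" unfolding c_def R_def by simp
  have R: "R < ?Q" unfolding R_def using Qpos[of k] by simp
  have IH: "\<And>z. goodp Pr \<alpha> z R \<Longrightarrow> \<bar>Tsum g \<alpha> z R\<bar> \<le> ?S * B"
    using Suc.IH[OF R] Suc.prems(3) by auto
  have bk: "\<And>z. goodp Pr \<alpha> z ?Q \<Longrightarrow> \<bar>Tsum g \<alpha> z ?Q\<bar> \<le> B"
    using Suc.prems(3) by auto
  have inner: "\<And>z. goodp Pr \<alpha> z (c' * ?Q + R) \<Longrightarrow> \<bar>Tsum g \<alpha> z (c' * ?Q + R)\<bar> \<le> real c' * B + ?S * B" for c'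
  proof (induction c')
    case 0
    then show ?case using IH by simp
  next
    case (Suc c')
    have e: "Suc c' * ?Q + R = ?Q + (c' * ?Q + R)" by simp
    have g: "goodp Pr \<alpha> z ?Q" "goodp Pr \<alpha> (z + real ?Q * \<alpha>) (c' * ?Q + R)"
      using goodp_split[of Pr \<alpha> z ?Q "c' * ?Q + R"] Suc.prems unfolding e by auto
    have "\<bar>Tsum g \<alpha> z (Suc c' * ?Q + R)\<bar> \<le> \<bar>Tsum g \<alpha> z ?Q\<bar> + \<bar>Tsum g \<alpha> (z + real ?Q * \<alpha>) (c' * ?Q + R)\<bar>"
      unfolding e Tsum_split by simp
    also have "\<dots> \<le> B + (real c' * B + ?S * B)" using bk[OF g(1)] Suc.IH[OF g(2)] by simp
    finally show ?case by (simp add: algebra_simps)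
  qed
  have "M < (A (Suc k) + 1) * ?Q" using Suc.prems(1) Qstep[of k] by simp
  then have "c < A (Suc k) + 1" unfolding c_def using Qpos[of k]
    by (simp add: div_less_iff_less_mult mult.commute)
  then have "real c * B \<le> real (A (Suc k)) * B" using B by (simp add: mult_right_mono)
  moreover have "\<bar>Tsum g \<alpha> z M\<bar> \<le> real c * B + ?S * B" using inner[of z c] Suc.prems(2) M by simp
  moreover have "(\<Sum>l=1..Suc k. real (A l)) = ?S + real (A (Suc k))" by simp
  ultimately show ?case by (simp add: algebra_simps)
qed

context
  fixes \<alpha> :: real
  assumes irr: "\<alpha> \<notin> \<rat>" and a01: "0 < \<alpha>" "\<alpha> < 1"
begin

lemma dist_bound:
  fixes t :: nat and u :: int
  assumes t1: "t \<ge> 1" and tK: "int t < cf_den \<alpha> K"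
  shows "\<bar>real t * \<alpha> - of_int u\<bar> \<ge> 1 / (of_int (cf_den \<alpha> K) * of_int (cf_den \<alpha> (Suc K)))"
proof -
  define Q where "Q = cf_den \<alpha> K"
  define Q' where "Q' = cf_den \<alpha> (Suc K)"
  define p where "p = cfp \<alpha> K"
  define e where "e = of_int Q * \<alpha> - of_int p"
  have Q1: "Q \<ge> 1" unfolding Q_def using den_pos[OF irr a01] by blast
  have QQ': "Q \<le> Q'" unfolding Q_def Q'_def using den_props[OF irr a01] by blast
  have e_lt: "\<bar>e\<bar> < 1 / of_int Q'"
    unfolding e_def Q_def Q'_def p_def using err_abs[OF irr a01, of K] err_lt[OF irr a01, of K] by simp
  have cp: "coprime p Q" unfolding p_def Q_def by (rule cop[OF irr a01])
  have nz: "int t * p - u * Q \<noteq> 0"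
  proof
    assume "int t * p - u * Q = 0"
    then have "Q dvd int t * p" by (metis dvd_triv_right eq_iff_diff_eq_0)
    then have "Q dvd int t" using cp by (simp add: coprime_commute coprime_dvd_mult_left_iff)
    then have "Q \<le> int t" using t1 by (intro zdvd_imp_le) auto
    then show False using tK Q_def by simp
  qed
  then have "\<bar>int t * p - u * Q\<bar> \<ge> 1" by linarith
  then have ge1: "\<bar>real_of_int (int t * p - u * Q)\<bar> \<ge> 1"
    by (metis of_int_1_le_iff of_int_abs)
  have Qpos: "real_of_int Q > 0" and Q'pos: "real_of_int Q' > 0" using Q1 QQ' by simp_all
  have "real_of_int Q * (real t * \<alpha> - of_int u) = real t * e + real_of_int (int t * p - u * Q)"
    unfolding e_def by (simp add: algebra_simps)
  moreover have "\<bar>real t * e\<bar> = real t * \<bar>e\<bar>" by (simp add: abs_mult)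
  ultimately have "\<bar>real_of_int Q * (real t * \<alpha> - of_int u)\<bar> \<ge> \<bar>real_of_int (int t * p - u * Q)\<bar> - real t * \<bar>e\<bar>"
    by arith
  moreover have "real t * \<bar>e\<bar> \<le> real t / of_int Q'"
    using e_lt by (simp add: divide_inverse mult_left_mono)
  moreover have "real t \<le> real_of_int Q' - 1" using tK QQ' Q_def
  proof -
    have "int t \<le> Q' - 1" using tK QQ' Q_def by simp
    then have "real_of_int (int t) \<le> real_of_int (Q' - 1)" by (simp only: of_int_le_iff)
    then show ?thesis by simp
  qed
  then have "real t / of_int Q' \<le> (real_of_int Q' - 1) / of_int Q'" using Q'pos by (simp add: divide_right_mono)
  moreover have "(real_of_int Q' - 1) / of_int Q' = 1 - 1 / of_int Q'" using Q'pos by (simp add: field_simps)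
  ultimately have "real_of_int Q * \<bar>real t * \<alpha> - of_int u\<bar> \<ge> 1 / of_int Q'"
    using ge1 Qpos by (simp add: abs_mult)
  then have "1 / of_int Q' \<le> \<bar>real t * \<alpha> - of_int u\<bar> * of_int Q" by (simp add: mult.commute)
  then have "(1 / of_int Q') / of_int Q \<le> \<bar>real t * \<alpha> - of_int u\<bar>"
    using pos_divide_le_eq[OF Qpos] by blast
  moreover have "1 / (of_int Q * of_int Q') = (1 / of_int Q') / (of_int Q :: real)" by simp
  ultimately show ?thesis unfolding Q_def[symmetric] Q'_def[symmetric] by linarith
qed

lemma frac_bound:
  fixes m s r :: nat
  assumes m1: "m \<ge> 1" and s: "s > 0" and sm: "int (s * m) < cf_den \<alpha> K"
  shows "frac (real m * \<alpha> - real r / real s) \<ge> 1 / (real s * of_int (cf_den \<alpha> K) * of_int (cf_den \<alpha> (Suc K)))"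
proof -
  define x where "x = real m * \<alpha> - real r / real s"
  define fl where "fl = \<lfloor>x\<rfloor>"
  have xf: "x = of_int fl + frac x" unfolding fl_def by (simp add: frac_def)
  have sp: "real s > 0" using s by simp
  have "real (s * m) * \<alpha> - of_int (int r + int s * fl) = real s * frac x"
  proof -
    have "real s * x = real (s * m) * \<alpha> - real r" unfolding x_def using sp by (simp add: field_simps)
    moreover have "real s * x = real s * of_int fl + real s * frac x"
      using arg_cong[OF xf, of "\<lambda>y. real s * y"] by (simp add: distrib_left)
    ultimately show ?thesis by (simp add: algebra_simps)
  qed
  moreover have "\<bar>real (s * m) * \<alpha> - of_int (int r + int s * fl)\<bar> \<ge> 1 / (of_int (cf_den \<alpha> K) * of_int (cf_den \<alpha> (Suc K)))"
    using dist_bound[of "s * m" K "int r + int s * fl"] m1 s sm by simp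
  ultimately have "real s * frac x \<ge> 1 / (of_int (cf_den \<alpha> K) * of_int (cf_den \<alpha> (Suc K)))"
    by (simp add: frac_ge_0)
  then have "1 / (of_int (cf_den \<alpha> K) * of_int (cf_den \<alpha> (Suc K))) \<le> frac x * real s"
    by (simp add: mult.commute)
  then have "(1 / (of_int (cf_den \<alpha> K) * of_int (cf_den \<alpha> (Suc K)))) / real s \<le> frac x"
    using pos_divide_le_eq[OF sp] by blast
  then show ?thesis unfolding x_def[symmetric] by (simp add: mult.commute mult.left_commute)
qed

end

theorem proposition4p3:
  fixes \<alpha> :: real and r s :: nat
  assumes irr: "\<alpha> \<notin> \<rat>"
    and alpha_range: "0 < \<alpha>" "\<alpha> < 1"
    and s_pos: "s > 0" and coprime_rs: "coprime r s" and r_lt: "r < s"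
  shows "\<exists>C>0. \<forall>K N b N'. K \<ge> 1 \<longrightarrow> real N < real_of_int (cf_den \<alpha> K) / real s
      \<longrightarrow> N = b * nat (cf_den \<alpha> (K - 1)) + N' \<longrightarrow> int N' < cf_den \<alpha> (K - 1)
      \<longrightarrow> \<bar>birkhoff_S (\<lambda>x. ln (frac (x - real r / real s))) N' \<alpha>
              (real b * real_of_int (cf_den \<alpha> (K - 1)) * \<alpha>)\<bar>
          \<le> C * ln (real_of_int (cf_den \<alpha> (K + 1))) * (\<Sum>l=1..K-1. real_of_int (cf_digit \<alpha> l))"
proof -
  note a01 = alpha_range
  define C where "C = 9 + (3 * ln (real s) + 1) / ln 2"
  have lns: "ln (real s) \<ge> 0" using s_pos by simp
  have Cpos: "C > 0" unfolding C_def using lns by (simp add: add_pos_nonneg)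
  have sp: "real s > 0" using s_pos by simp
  have qpos: "\<And>k. cf_den \<alpha> k \<ge> 1" using den_pos[OF irr a01] by blast
  have qmono: "\<And>j k. j \<le> k \<Longrightarrow> cf_den \<alpha> j \<le> cf_den \<alpha> k" using den_mono[OF irr a01] by blast
  have intg: "integral {0..1} (\<lambda>x. ln (frac (x - real r / real s))) = -1"
    using r_lt sp by (intro integral_ln_frac) auto
  show ?thesis
  proof (intro exI[of _ C] conjI allI impI)
    show "C > 0" by (rule Cpos)
    fix K N b N'
    assume K1: "K \<ge> 1" and NK: "real N < real_of_int (cf_den \<alpha> K) / real s"
      and Neq: "N = b * nat (cf_den \<alpha> (K - 1)) + N'" and N'lt: "int N' < cf_den \<alpha> (K - 1)"
    define d where "d = 1 / (real s * of_int (cf_den \<alpha> K) * of_int (cf_den \<alpha> (Suc K)))"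
    define z where "z = real b * real_of_int (cf_den \<alpha> (K - 1)) * \<alpha> - real r / real s"
    define g where "g = (\<lambda>x::real. ln (frac x))"
    define L where "L = ln (real_of_int (cf_den \<alpha> (K + 1)))"
    define Bd where "Bd = 3 * \<bar>ln d\<bar> + 3 * L + 1"
    define Pr where "Pr = (\<lambda>x::real. frac x \<ge> d)"
    have qK: "real_of_int (cf_den \<alpha> K) \<ge> 1" and qK1: "real_of_int (cf_den \<alpha> (Suc K)) \<ge> 1"
      using qpos[of K] qpos[of "Suc K"] by simp_all
    have s1: "real s \<ge> 1" using s_pos by simp
    have "1 * 1 \<le> real s * of_int (cf_den \<alpha> K)" using s1 qK by (intro mult_mono) auto
    then have "1 * 1 \<le> real s * of_int (cf_den \<alpha> K) * of_int (cf_den \<alpha> (Suc K))"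
      using qK1 by (intro mult_mono) auto
    then have X: "real s * of_int (cf_den \<alpha> K) * of_int (cf_den \<alpha> (Suc K)) \<ge> 1" by simp
    have dpos: "d > 0" and d1: "d \<le> 1" unfolding d_def using X by simp_all
    have L2: "L \<ge> ln 2"
    proof -
      have "cf_den \<alpha> (K + 1) \<ge> 2" using den_ge2[OF irr a01, of "K+1"] K1 by simp
      then have "real_of_int (cf_den \<alpha> (K + 1)) \<ge> 2" by simp
      then show ?thesis unfolding L_def by simp
    qed
    have L0: "L \<ge> 0" using L2 by (smt (verit) ln_ge_zero one_le_numeral)
    have LHS: "birkhoff_S (\<lambda>x. ln (frac (x - real r / real s))) N' \<alpha> (real b * real_of_int (cf_den \<alpha> (K - 1)) * \<alpha>)
        = Tsum g \<alpha> z N'"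
      unfolding birkhoff_S_def Tsum_def intg g_def z_def
      by (simp add: algebra_simps)
    have good: "goodp Pr \<alpha> z N'"
      unfolding goodp_def Pr_def
    proof
      fix n assume n: "n \<in> {1..N'}"
      define m where "m = b * nat (cf_den \<alpha> (K - 1)) + n"
      have m1: "m \<ge> 1" using n unfolding m_def by simp
      have mN: "m \<le> N" using n Neq unfolding m_def by simp
      have "real (s * m) \<le> real s * real N" using mN sp by (simp add: mult_left_mono)
      also have "\<dots> < real_of_int (cf_den \<alpha> K)" using NK sp by (simp add: field_simps)
      finally have "int (s * m) < cf_den \<alpha> K" by linarith
      from frac_bound[OF irr a01 m1 s_pos this, of r]
      have "frac (real m * \<alpha> - real r / real s) \<ge> d" unfolding d_def by simp
      moreover have "z + real n * \<alpha> = real m * \<alpha> - real r / real s"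
        unfolding z_def m_def using qpos[of "K - 1"] by (simp add: algebra_simps)
      ultimately show "d \<le> frac (z + real n * \<alpha>)" by simp
    qed
    have ost: "\<bar>Tsum g \<alpha> z N'\<bar> \<le> (\<Sum>l=1..K-1. real (nat (cf_digit \<alpha> l))) * Bd"
    proof (rule ostrowski[where Qs = "\<lambda>j. nat (cf_den \<alpha> j)" and A = "\<lambda>l. nat (cf_digit \<alpha> l)" and k = "K - 1"])
      show "nat (cf_den \<alpha> 0) = 1" by simp
      show "nat (cf_den \<alpha> (Suc j)) \<le> (nat (cf_digit \<alpha> (Suc j)) + 1) * nat (cf_den \<alpha> j)" for j
      proof -
        have h: "cf_den \<alpha> (Suc j) \<le> (cf_digit \<alpha> (Suc j) + 1) * cf_den \<alpha> j" by (rule den_step[OF irr a01])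
        have "cf_digit \<alpha> (Suc j) \<ge> 1" by (rule digit_ge1[OF irr a01])
        have gen: "nat ((x + 1) * y) = (nat x + 1) * nat y" if "x \<ge> 1" "y \<ge> 1" for x y :: int
          using that by (simp add: nat_mult_distrib nat_add_distrib)
        have "nat ((cf_digit \<alpha> (Suc j) + 1) * cf_den \<alpha> j) = (nat (cf_digit \<alpha> (Suc j)) + 1) * nat (cf_den \<alpha> j)"
          by (rule gen[OF \<open>cf_digit \<alpha> (Suc j) \<ge> 1\<close> qpos[of j]])
        with h show ?thesis by (metis nat_mono)
      qed
      show "nat (cf_den \<alpha> j) \<ge> 1" for j using qpos[of j] by simp
      show "Bd \<ge> 0" unfolding Bd_def using L0 by simp
      show "N' < nat (cf_den \<alpha> (K - 1))" using N'lt by simp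
      show "goodp Pr \<alpha> z N'" by (rule good)
      fix j z' assume j: "j < K - 1" and gz: "goodp Pr \<alpha> z' (nat (cf_den \<alpha> j))"
      define Q where "Q = nat (cf_den \<alpha> j)"
      have Q1: "Q \<ge> 1" unfolding Q_def using qpos[of j] by simp
      have iQ: "int Q = cf_den \<alpha> j" unfolding Q_def using qpos[of j] by simp
      have rQ: "real Q = real_of_int (cf_den \<alpha> j)" using iQ by (metis of_int_of_nat_eq)
      have cp: "coprime (cfp \<alpha> j) (int Q)" unfolding iQ by (rule cop[OF irr a01])
      have del: "\<bar>real Q * \<alpha> - of_int (cfp \<alpha> j)\<bar> < 1 / real Q"
      proof -
        have "\<bar>real Q * \<alpha> - of_int (cfp \<alpha> j)\<bar> = cfE \<alpha> j" unfolding rQ by (rule err_abs[OF irr a01])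
        also have "\<dots> < 1 / of_int (cf_den \<alpha> (Suc j))" by (rule err_lt[OF irr a01])
        also have "\<dots> \<le> 1 / real Q" unfolding rQ using qpos[of j] qmono[of j "Suc j"]
          by (intro divide_left_mono) auto
        finally show ?thesis .
      qed
      have gd: "\<forall>n\<in>{1..Q}. frac (z' + real n * \<alpha>) \<ge> d" using gz unfolding goodp_def Pr_def Q_def by blast
      have blk: "\<bar>(\<Sum>n=1..Q. ln (frac (z' + real n * \<alpha>))) + real Q\<bar> \<le> 3 * \<bar>ln d\<bar> + 3 * ln (real Q) + 1"
        by (rule block[OF Q1 cp del dpos d1 gd])
      have "ln (real Q) \<le> L"
      proof -
        have "cf_den \<alpha> j \<le> cf_den \<alpha> (K + 1)" using j by (intro qmono) simp
        then have "real Q \<le> real_of_int (cf_den \<alpha> (K + 1))" unfolding rQ by simp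
        then show ?thesis unfolding L_def using Q1 by simp
      qed
      then show "\<bar>Tsum g \<alpha> z' (nat (cf_den \<alpha> j))\<bar> \<le> Bd"
        using blk unfolding Tsum_def g_def Bd_def Q_def by simp
    qed
    have sums: "(\<Sum>l=1..K-1. real (nat (cf_digit \<alpha> l))) = (\<Sum>l=1..K-1. real_of_int (cf_digit \<alpha> l))"
    proof (rule sum.cong)
      fix l assume "l \<in> {1..K-1}"
      then obtain l' where "l = Suc l'" by (cases l) auto
      then have "cf_digit \<alpha> l \<ge> 1" using digit_ge1[OF irr a01] by simp
      then show "real (nat (cf_digit \<alpha> l)) = real_of_int (cf_digit \<alpha> l)" by simp
    qed simp
    have S0: "(\<Sum>l=1..K-1. real (nat (cf_digit \<alpha> l))) \<ge> 0" by (simp add: sum_nonneg)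
    have lnd: "\<bar>ln d\<bar> \<le> ln (real s) + 2 * L"
    proof -
      have "ln d = - (ln (real s) + ln (real_of_int (cf_den \<alpha> K)) + ln (real_of_int (cf_den \<alpha> (Suc K))))"
        unfolding d_def using sp qK qK1 by (simp add: ln_div ln_mult)
      moreover have "ln (real_of_int (cf_den \<alpha> K)) \<le> L" unfolding L_def
        using qmono[of K "K+1"] qK by simp
      moreover have "ln (real_of_int (cf_den \<alpha> (Suc K))) = L" unfolding L_def by simp
      moreover have "ln (real_of_int (cf_den \<alpha> K)) \<ge> 0" by (rule ln_ge_zero[OF qK])
      ultimately show ?thesis using lns L0 by linarith
    qed
    have BdC: "Bd \<le> C * L"
    proof -
      have "Bd \<le> 9 * L + (3 * ln (real s) + 1)" unfolding Bd_def using lnd by linarith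
      also have "(3 * ln (real s) + 1) \<le> (3 * ln (real s) + 1) * (L / ln 2)"
      proof -
        have "L / ln 2 \<ge> 1" using L2 by simp
        then show ?thesis using lns by (metis mult_cancel_left1 mult_left_mono add_nonneg_nonneg mult_nonneg_nonneg zero_le_numeral zero_le_one)
      qed
      also have "9 * L + (3 * ln (real s) + 1) * (L / ln 2) = C * L" unfolding C_def by (simp add: algebra_simps add_divide_distrib)
      finally show ?thesis by simp
    qed
    have "\<bar>Tsum g \<alpha> z N'\<bar> \<le> (\<Sum>l=1..K-1. real (nat (cf_digit \<alpha> l))) * (C * L)"
      using ost mult_left_mono[OF BdC S0] by linarith
    then show "\<bar>birkhoff_S (\<lambda>x. ln (frac (x - real r / real s))) N' \<alpha> (real b * real_of_int (cf_den \<alpha> (K - 1)) * \<alpha>)\<bar>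
          \<le> C * ln (real_of_int (cf_den \<alpha> (K + 1))) * (\<Sum>l=1..K-1. real_of_int (cf_digit \<alpha> l))"
      unfolding LHS sums L_def[symmetric] by (simp add: algebra_simps)
  qed
qed

end
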